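(* Let $\mathcal{L},\mathcal{L}'$ be intuitionistic abstract logics and $h:\mathcal{L}\to\mathcal{L}'$ a strongly stable logic map. Then $h$ is a morphism of the associated Heyting algebras: for all $a,b\in Expr_{\mathcal{L}}$, $h(a\wedge b)=h(a)\wedge' h(b)$, $h(a\vee b)=h(a)\vee' h(b)$ and $h(a\to b)=h(a)\to' h(b)$, where equality is equality in the Heyting algebra $(Expr_{\mathcal{L}'},\le')$ (i.e. mutual $\le'$).
   Context: An abstract logic is a triple $\mathcal{L}=(Expr_{\mathcal{L}},Th_{\mathcal{L}},\mathcal{C}_{\mathcal{L}})$ where $Expr_{\mathcal{L}}$ is a set, $Th_{\mathcal{L}}$ a non-empty set of subsets of $Expr_{\mathcal{L}}$ (theories) closed under intersections of non-empty subfamilies, and $\mathcal{C}_{\mathcal{L}}$ a set of operations on $Expr_{\mathcal{L}}$. $\mathcal{L}$ is closed under union of chains if the union of every non-empty chain of theories is a theory. A theory $T$ is prime if $T=\bigcap\mathcal{T}$ with $\mathcal{T}\subseteq Th_{\mathcal{L}}$ non-empty finite implies $T\in\mathcal{T}$; totally prime if this holds for non-empty $\mathcal{T}$ of any size. $PTh_{\mathcal{L}}$, $TPTh_{\mathcal{L}}$ denote these sets. An intuitionistic abstract logic is one closed under union of chains with binary connectives $\vee,\wedge,\to$ and constants $\top,\bot$ such that for all $a,b$ and all $T\in TPTh_{\mathcal{L}}$: $a\vee b\in T$ iff $a\in T$ or $b\in T$; $a\wedge b\in T$ iff $a,b\in T$; $a\to b\in T$ iff for every totally prime $T'\supseteq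 T$, $a\in T'$ implies $b\in T'$; $\top$ lies in every theory and $\bot$ in none. The associated Heyting algebra is $(Expr_{\mathcal{L}},\le)$ with $a\le b$ iff every prime theory containing $a$ contains $b$, and operations $\wedge,\vee,\to,\bot,\top$ (elements with $a\le b\le a$ identified). A logic map $h:\mathcal{L}\to\mathcal{L}'$ is a function $Expr_{\mathcal{L}}\to Expr_{\mathcal{L}'}$ with $h^{-1}(T')\in Th_{\mathcal{L}}$ for all $T'\in Th_{\mathcal{L}'}$; it is strongly stable if $h^{-1}(P')\in PTh_{\mathcal{L}}$ for all $P'\in PTh_{\mathcal{L}'}$ and whenever $P'\in PTh_{\mathcal{L}'}$, $P\in PTh_{\mathcal{L}}$ with $h^{-1}(P')\subseteq P$, there is $Q'\in PTh_{\mathcal{L}'}$ with $P'\subseteq Q'$ and $h^{-1}(Q')=P$. *)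

theory Defs
  imports Main
begin

text \<open>An abstract logic with expression set UNIV :: 'a set, given by its set of theories Th.
  The operations C_L are represented by the explicitly given connectives.\<close>

definition abstract_logic :: "'a set set \<Rightarrow> bool" where
  "abstract_logic Th \<longleftrightarrow> Th \<noteq> {} \<and>
     (\<forall>F. F \<subseteq> Th \<and> F \<noteq> {} \<longrightarrow> \<Inter>F \<in> Th)"

definition closed_union_chains :: "'a set set \<Rightarrow> bool" where
  "closed_union_chains Th \<longleftrightarrow>
     (\<forall>C. C \<subseteq> Th \<and> C \<noteq> {} \<and> subset.chain Th C \<longrightarrow> \<Union>C \<in> Th)"

definition prime_theories :: "'a set set \<Rightarrow> 'a set set" where
  "prime_theories Th = {T \<in> Th. \<forall>F. F \<subseteq> Th \<and> F \<noteq> {} \<and> finite F \<and> T = \<Inter>F \<longrightarrow> T \<in> F}"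

definition tprime_theories :: "'a set set \<Rightarrow> 'a set set" where
  "tprime_theories Th = {T \<in> Th. \<forall>F. F \<subseteq> Th \<and> F \<noteq> {} \<and> T = \<Inter>F \<longrightarrow> T \<in> F}"

definition intuitionistic_logic ::
  "'a set set \<Rightarrow> ('a \<Rightarrow> 'a \<Rightarrow> 'a) \<Rightarrow> ('a \<Rightarrow> 'a \<Rightarrow> 'a) \<Rightarrow> ('a \<Rightarrow> 'a \<Rightarrow> 'a) \<Rightarrow> 'a \<Rightarrow> 'a \<Rightarrow> bool"
  where
  "intuitionistic_logic Th dis con imp tp bt \<longleftrightarrow>
     abstract_logic Th \<and> closed_union_chains Th \<and>
     (\<forall>a b. \<forall>T \<in> tprime_theories Th.
        (dis a b \<in> T \<longleftrightarrow> a \<in> T \<or> b \<in> T) \<and>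
        (con a b \<in> T \<longleftrightarrow> a \<in> T \<and> b \<in> T) \<and>
        (imp a b \<in> T \<longleftrightarrow> (\<forall>T' \<in> tprime_theories Th. T \<subseteq> T' \<longrightarrow> a \<in> T' \<longrightarrow> b \<in> T'))) \<and>
     (\<forall>T \<in> Th. tp \<in> T \<and> bt \<notin> T)"

definition heyting_le :: "'a set set \<Rightarrow> 'a \<Rightarrow> 'a \<Rightarrow> bool" where
  "heyting_le Th a b \<longleftrightarrow> (\<forall>P \<in> prime_theories Th. a \<in> P \<longrightarrow> b \<in> P)"

definition heyting_eq :: "'a set set \<Rightarrow> 'a \<Rightarrow> 'a \<Rightarrow> bool" where
  "heyting_eq Th a b \<longleftrightarrow> heyting_le Th a b \<and> heyting_le Th b a"

definition logic_map :: "'a set set \<Rightarrow> 'b set set \<Rightarrow> ('a \<Rightarrow> 'b) \<Rightarrow> bool" where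
  "logic_map Th Th' h \<longleftrightarrow> (\<forall>T' \<in> Th'. h -` T' \<in> Th)"

definition strongly_stable :: "'a set set \<Rightarrow> 'b set set \<Rightarrow> ('a \<Rightarrow> 'b) \<Rightarrow> bool" where
  "strongly_stable Th Th' h \<longleftrightarrow>
     (\<forall>P' \<in> prime_theories Th'. h -` P' \<in> prime_theories Th) \<and>
     (\<forall>P' \<in> prime_theories Th'. \<forall>P \<in> prime_theories Th. h -` P' \<subseteq> P \<longrightarrow>
        (\<exists>Q' \<in> prime_theories Th'. P' \<subseteq> Q' \<and> h -` Q' = P))"

end

theory Submission
  imports Defs
begin

lemma tp_sub_prime: "tprime_theories Th \<subseteq> prime_theories Th"
  unfolding tprime_theories_def prime_theories_def by blast

lemma L1:
  assumes IL: "intuitionistic_logic Th dis con imp tp bt"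
    and T: "T \<in> Th" and x: "x \<notin> T"
  shows "\<exists>M\<in>tprime_theories Th. T \<subseteq> M \<and> x \<notin> M"
proof -
  let ?S = "{M \<in> Th. T \<subseteq> M \<and> x \<notin> M}"
  have cu: "closed_union_chains Th" using IL unfolding intuitionistic_logic_def by blast
  have "\<exists>M\<in>?S. \<forall>X\<in>?S. M \<subseteq> X \<longrightarrow> X = M"
  proof (rule subset_Zorn_nonempty)
    show "?S \<noteq> {}" using T x by blast
  next
    fix C assume C: "C \<noteq> {}" "subset.chain ?S C"
    then have "subset.chain Th C" unfolding subset.chain_def by blast
    moreover have "C \<subseteq> Th" using C unfolding subset.chain_def by blast
    ultimately have "\<Union>C \<in> Th" using cu C(1) unfolding closed_union_chains_def by blast
    moreover have "T \<subseteq> \<Union>C" "x \<notin> \<Union>C" using C unfolding subset.chain_def by blast+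
    ultimately show "\<Union>C \<in> ?S" by blast
  qed
  then obtain M where M: "M \<in> ?S" and max: "\<forall>X\<in>?S. M \<subseteq> X \<longrightarrow> X = M" by blast
  have "M \<in> tprime_theories Th"
    unfolding tprime_theories_def
  proof (intro CollectI conjI allI impI)
    show "M \<in> Th" using M by blast
    fix F assume F: "F \<subseteq> Th \<and> F \<noteq> {} \<and> M = \<Inter>F"
    show "M \<in> F"
    proof (rule ccontr)
      assume nM: "M \<notin> F"
      have "\<forall>X\<in>F. x \<in> X"
      proof
        fix X assume X: "X \<in> F"
        show "x \<in> X"
        proof (rule ccontr)
          assume "x \<notin> X"
          moreover have "M \<subseteq> X" using F X by blast
          ultimately have "X = M" using max M F X by blast
          thus False using nM X by blast
        qed
      qed
      then have "x \<in> M" using F by blast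
      thus False using M by blast
    qed
  qed
  thus ?thesis using M by blast
qed

lemma L2:
  assumes IL: "intuitionistic_logic Th dis con imp tp bt" and T: "T \<in> Th"
  shows "x \<in> T \<longleftrightarrow> (\<forall>M\<in>tprime_theories Th. T \<subseteq> M \<longrightarrow> x \<in> M)"
  using L1[OF IL T] by blast

lemma L3:
  assumes IL: "intuitionistic_logic Th dis con imp tp bt"
  shows "heyting_le Th x y \<longleftrightarrow> (\<forall>M\<in>tprime_theories Th. x \<in> M \<longrightarrow> y \<in> M)"
proof
  assume "heyting_le Th x y" thus "\<forall>M\<in>tprime_theories Th. x \<in> M \<longrightarrow> y \<in> M"
    using tp_sub_prime unfolding heyting_le_def by blast
next
  assume H: "\<forall>M\<in>tprime_theories Th. x \<in> M \<longrightarrow> y \<in> M"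
  show "heyting_le Th x y" unfolding heyting_le_def
  proof (intro ballI impI)
    fix P assume P: "P \<in> prime_theories Th" "x \<in> P"
    have PT: "P \<in> Th" using P unfolding prime_theories_def by blast
    show "y \<in> P" using L2[OF IL PT, of x] L2[OF IL PT, of y] P H by blast
  qed
qed

lemma L4:
  assumes IL: "intuitionistic_logic Th dis con imp tp bt" and T: "T \<in> Th"
  shows "con a b \<in> T \<longleftrightarrow> a \<in> T \<and> b \<in> T"
proof -
  have c: "\<forall>M\<in>tprime_theories Th. con a b \<in> M \<longleftrightarrow> a \<in> M \<and> b \<in> M"
    using IL unfolding intuitionistic_logic_def by blast
  show ?thesis using L2[OF IL T, of "con a b"] L2[OF IL T, of a] L2[OF IL T, of b] c by blast
qed

lemma L6:
  assumes IL: "intuitionistic_logic Th dis con imp tp bt" and T: "T \<in> Th"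
  shows "imp a b \<in> T \<longleftrightarrow> (\<forall>M\<in>tprime_theories Th. T \<subseteq> M \<longrightarrow> a \<in> M \<longrightarrow> b \<in> M)"
proof -
  have c: "\<forall>M\<in>tprime_theories Th. imp a b \<in> M \<longleftrightarrow>
     (\<forall>M'\<in>tprime_theories Th. M \<subseteq> M' \<longrightarrow> a \<in> M' \<longrightarrow> b \<in> M')"
    using IL unfolding intuitionistic_logic_def by blast
  show ?thesis
  proof
    assume "imp a b \<in> T"
    thus "\<forall>M\<in>tprime_theories Th. T \<subseteq> M \<longrightarrow> a \<in> M \<longrightarrow> b \<in> M"
      using L2[OF IL T, of "imp a b"] c by blast
  next
    assume H: "\<forall>M\<in>tprime_theories Th. T \<subseteq> M \<longrightarrow> a \<in> M \<longrightarrow> b \<in> M"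
    have "\<forall>M\<in>tprime_theories Th. T \<subseteq> M \<longrightarrow> imp a b \<in> M"
    proof (intro ballI impI)
      fix M assume "M \<in> tprime_theories Th" "T \<subseteq> M"
      thus "imp a b \<in> M" using c H by (meson order_trans)
    qed
    thus "imp a b \<in> T" using L2[OF IL T, of "imp a b"] by blast
  qed
qed

lemma L6':
  assumes IL: "intuitionistic_logic Th dis con imp tp bt" and T: "T \<in> Th"
    and i: "imp a b \<in> T" and S: "S \<in> Th" "T \<subseteq> S" "a \<in> S"
  shows "b \<in> S"
proof -
  have "\<forall>M\<in>tprime_theories Th. S \<subseteq> M \<longrightarrow> b \<in> M"
    using L6[OF IL T] i S by blast
  thus ?thesis using L2[OF IL S(1)] by blast
qed

lemma L5:
  assumes IL: "intuitionistic_logic Th dis con imp tp bt" and P: "P \<in> prime_theories Th"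
  shows "dis a b \<in> P \<longleftrightarrow> a \<in> P \<or> b \<in> P"
proof -
  have PT: "P \<in> Th" using P unfolding prime_theories_def by blast
  have c: "\<forall>M\<in>tprime_theories Th. dis a b \<in> M \<longleftrightarrow> a \<in> M \<or> b \<in> M"
    using IL unfolding intuitionistic_logic_def by blast
  have al: "\<forall>F. F \<subseteq> Th \<and> F \<noteq> {} \<longrightarrow> \<Inter>F \<in> Th"
    using IL unfolding intuitionistic_logic_def abstract_logic_def by blast
  show ?thesis
  proof
    assume d: "dis a b \<in> P"
    show "a \<in> P \<or> b \<in> P"
    proof (rule ccontr)
      assume n: "\<not> (a \<in> P \<or> b \<in> P)"
      define F where "F = {M\<in>tprime_theories Th. P \<subseteq> M}"
      have dF: "\<forall>M\<in>F. a \<in> M \<or> b \<in> M" using d c unfolding F_def by blast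
      obtain Ma where Ma: "Ma \<in> F" "a \<notin> Ma" using L1[OF IL PT, of a] n unfolding F_def by blast
      obtain Mb where Mb: "Mb \<in> F" "b \<notin> Mb" using L1[OF IL PT, of b] n unfolding F_def by blast
      define A where "A = \<Inter>{M\<in>F. a \<in> M}"
      define B where "B = \<Inter>{M\<in>F. a \<notin> M}"
      have FT: "F \<subseteq> Th" unfolding F_def tprime_theories_def by blast
      have AT: "A \<in> Th" unfolding A_def using al FT Mb dF by (intro al[rule_format]) blast
      have BT: "B \<in> Th" unfolding B_def using al FT Ma by (intro al[rule_format]) blast
      have aA: "a \<in> A" unfolding A_def by blast
      have bB: "b \<in> B" unfolding B_def using dF by blast
      have PAB: "P = \<Inter>{A, B}"
      proof
        show "P \<subseteq> \<Inter>{A, B}" unfolding A_def B_def F_def by blast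
        show "\<Inter>{A, B} \<subseteq> P"
        proof
          fix x assume x: "x \<in> \<Inter>{A, B}"
          have "\<forall>M\<in>F. x \<in> M"
          proof
            fix M assume "M \<in> F"
            thus "x \<in> M" using x unfolding A_def B_def by (cases "a \<in> M") auto
          qed
          thus "x \<in> P" using L2[OF IL PT, of x] unfolding F_def by blast
        qed
      qed
      have pr: "\<forall>G. G \<subseteq> Th \<and> G \<noteq> {} \<and> finite G \<and> P = \<Inter>G \<longrightarrow> P \<in> G"
        using P unfolding prime_theories_def by blast
      have "{A, B} \<subseteq> Th \<and> {A, B} \<noteq> {} \<and> finite {A, B} \<and> P = \<Inter>{A, B}"
        using PAB AT BT by simp
      hence "P \<in> {A, B}" using pr by blast
      thus False using aA bB n by blast
    qed
  next
    assume "a \<in> P \<or> b \<in> P"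
    thus "dis a b \<in> P" using L2[OF IL PT, of "dis a b"] L2[OF IL PT, of a] L2[OF IL PT, of b] c
      by blast
  qed
qed

theorem lemma4p6:
  fixes Th :: "'a set set" and Th' :: "'b set set" and h :: "'a \<Rightarrow> 'b"
  assumes "intuitionistic_logic Th dis con imp tp bt"
    and "intuitionistic_logic Th' dis' con' imp' tp' bt'"
    and "logic_map Th Th' h"
    and "strongly_stable Th Th' h"
  shows "\<forall>a b. heyting_eq Th' (h (con a b)) (con' (h a) (h b)) \<and>
                heyting_eq Th' (h (dis a b)) (dis' (h a) (h b)) \<and>
                heyting_eq Th' (h (imp a b)) (imp' (h a) (h b))"
proof (intro allI)
  fix a b
  note IL = assms(1) and IL' = assms(2)
  have eqI: "heyting_eq Th' x y" if "\<forall>Q\<in>tprime_theories Th'. x \<in> Q \<longleftrightarrow> y \<in> Q" for x y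
    unfolding heyting_eq_def L3[OF IL'] using that by simp
  have ss1: "\<forall>P'\<in>prime_theories Th'. h -` P' \<in> prime_theories Th"
    and ss2: "\<forall>P'\<in>prime_theories Th'. \<forall>P\<in>prime_theories Th. h -` P' \<subseteq> P \<longrightarrow>
        (\<exists>Q'\<in>prime_theories Th'. P' \<subseteq> Q' \<and> h -` Q' = P)"
    using assms(4) unfolding strongly_stable_def by simp_all
  have pre: "h -` Q \<in> prime_theories Th" if "Q \<in> tprime_theories Th'" for Q
    using ss1 tp_sub_prime that by blast
  have preT: "h -` Q \<in> Th" if "Q \<in> prime_theories Th'" for Q
    using ss1 that unfolding prime_theories_def by blast
  have PT: "P \<in> Th" if "P \<in> prime_theories Th" for P using that unfolding prime_theories_def by blast
  have PT': "P \<in> Th'" if "P \<in> prime_theories Th'" for P using that unfolding prime_theories_def by blast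
  have QT': "Q \<in> Th'" if "Q \<in> tprime_theories Th'" for Q using that unfolding tprime_theories_def by blast
  have c': "\<forall>M\<in>tprime_theories Th'. con' x y \<in> M \<longleftrightarrow> x \<in> M \<and> y \<in> M" for x y
    using IL' unfolding intuitionistic_logic_def by blast
  have d': "\<forall>M\<in>tprime_theories Th'. dis' x y \<in> M \<longleftrightarrow> x \<in> M \<or> y \<in> M" for x y
    using IL' unfolding intuitionistic_logic_def by blast
  have i': "\<forall>M\<in>tprime_theories Th'. imp' x y \<in> M \<longleftrightarrow>
     (\<forall>M'\<in>tprime_theories Th'. M \<subseteq> M' \<longrightarrow> x \<in> M' \<longrightarrow> y \<in> M')" for x y
    using IL' unfolding intuitionistic_logic_def by blast
  have 1: "heyting_eq Th' (h (con a b)) (con' (h a) (h b))"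
  proof (rule eqI, intro ballI)
    fix Q assume Q: "Q \<in> tprime_theories Th'"
    show "h (con a b) \<in> Q \<longleftrightarrow> con' (h a) (h b) \<in> Q"
      using L4[OF IL PT[OF pre[OF Q]], of a b] c' Q by auto
  qed
  have 2: "heyting_eq Th' (h (dis a b)) (dis' (h a) (h b))"
  proof (rule eqI, intro ballI)
    fix Q assume Q: "Q \<in> tprime_theories Th'"
    show "h (dis a b) \<in> Q \<longleftrightarrow> dis' (h a) (h b) \<in> Q"
      using L5[OF IL pre[OF Q], of a b] d' Q by auto
  qed
  have 3: "heyting_eq Th' (h (imp a b)) (imp' (h a) (h b))"
  proof (rule eqI, intro ballI)
    fix Q assume Q: "Q \<in> tprime_theories Th'"
    have PQ: "h -` Q \<in> Th" using PT[OF pre[OF Q]] .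
    show "h (imp a b) \<in> Q \<longleftrightarrow> imp' (h a) (h b) \<in> Q"
    proof
      assume "h (imp a b) \<in> Q"
      hence im: "imp a b \<in> h -` Q" by simp
      have "\<forall>R\<in>tprime_theories Th'. Q \<subseteq> R \<longrightarrow> h a \<in> R \<longrightarrow> h b \<in> R"
      proof (intro ballI impI)
        fix R assume R: "R \<in> tprime_theories Th'" "Q \<subseteq> R" "h a \<in> R"
        have "b \<in> h -` R"
          by (rule L6'[OF IL PQ im PT[OF pre[OF R(1)]]]) (use R in auto)
        thus "h b \<in> R" by simp
      qed
      thus "imp' (h a) (h b) \<in> Q" using i' Q by blast
    next
      assume "imp' (h a) (h b) \<in> Q"
      hence H: "\<forall>R\<in>tprime_theories Th'. Q \<subseteq> R \<longrightarrow> h a \<in> R \<longrightarrow> h b \<in> R" using i' Q by blast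
      have "\<forall>M\<in>tprime_theories Th. h -` Q \<subseteq> M \<longrightarrow> a \<in> M \<longrightarrow> b \<in> M"
      proof (intro ballI impI)
        fix M assume M: "M \<in> tprime_theories Th" "h -` Q \<subseteq> M" "a \<in> M"
        have Qp: "Q \<in> prime_theories Th'" using Q tp_sub_prime by blast
        have Mp: "M \<in> prime_theories Th" using M(1) tp_sub_prime by blast
        obtain R where R: "R \<in> prime_theories Th'" "Q \<subseteq> R" "h -` R = M"
          using ss2[rule_format, OF Qp Mp M(2)] by blast
        have "\<forall>R'\<in>tprime_theories Th'. R \<subseteq> R' \<longrightarrow> h b \<in> R'"
          using H R M(3) by auto
        hence "h b \<in> R" using L2[OF IL' PT'[OF R(1)]] by blast
        thus "b \<in> M" using R by blast
      qed
      hence "imp a b \<in> h -` Q" using L6[OF IL PQ] by blast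
      thus "h (imp a b) \<in> Q" by simp
    qed
  qed
  show "heyting_eq Th' (h (con a b)) (con' (h a) (h b)) \<and>
        heyting_eq Th' (h (dis a b)) (dis' (h a) (h b)) \<and>
        heyting_eq Th' (h (imp a b)) (imp' (h a) (h b))" using 1 2 3 by blast
qed

end
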